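(* Let $G=(V,E)$ be a finite simple graph, let $\mathbf{v}=(v_e)_{e\in E}$ and $\mathbf{w}=(w_i)_{i\in V}$ be indeterminates, let $q$ be an indeterminate, and let $\mathbf{x}=(x_i)_{i\in V}$ be commuting indeterminates. Then, as formal power series in $\mathbf{x}$ (with all sums over $\mathbf{n}\in\mathbb{N}^V$), \[ \sum_{\mathbf{n}} Z_{G[\mathbf{n}]}(q,\mathbf{v})\,\frac{\mathbf{x}^{\mathbf{n}}}{\mathbf{n}!} =\left(\sum_{\mathbf{n}}\Bigl(\prod_{ij\in E}(1+v_{ij})^{n_in_j}\Bigr)\frac{\mathbf{x}^{\mathbf{n}}}{\mathbf{n}!}\right)^{q} \] and \[ \sum_{\mathbf{n}} Z_{G'[\mathbf{n}]}(q,\mathbf{v},\mathbf{w})\,\frac{\mathbf{x}^{\mathbf{n}}}{\mathbf{n}!} =\left(\sum_{\mathbf{n}}\Bigl(\prod_{ij\in E}(1+v_{ij})^{n_in_j}\Bigr)\Bigl(\prod_{i\in V}(1+w_i)^{n_i(n_i-1)/2}\Bigr)\frac{\mathbf{x}^{\mathbf{n}}}{\mathbf{n}!}\right)^{q}. \]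
   Context: For a finite graph $H$ with edge weights $(v_e)_{e\in E(H)}$, the multivariate Tutte polynomial is $Z_H(q,\mathbf{v})=\sum_{A\subseteq E(H)} q^{k(A)}\prod_{e\in A}v_e$, where $k(A)$ is the number of connected components of the spanning subgraph $(V(H),A)$; for the empty graph (no vertices) $Z=1$. For $\mathbf{n}\in\mathbb{N}^V$ write $\mathbf{x}^{\mathbf{n}}=\prod_i x_i^{n_i}$ and $\mathbf{n}!=\prod_i n_i!$. $G[\mathbf{n}]$ is the graph with vertex set $\{(i,\alpha): i\in V,\ \alpha\in[n_i]\}$ and an edge $\langle(i,\alpha),(j,\beta)\rangle$ of weight $v_{ij}$ for every $ij\in E$, $\alpha\in[n_i]$, $\beta\in[n_j]$ (each vertex $i$ is blown up into an independent set of size $n_i$). $G'[\mathbf{n}]$ has the same vertex set and the same edges, plus an edge $\langle(i,\alpha),(i,\beta)\rangle$ of weight $w_i$ for every $i\in V$ and $\alpha\ne\beta$ in $[n_i]$ (each vertex blown up into a clique); $Z_{G'[\mathbf{n}]}(q,\mathbf{v},\mathbf{w})$ is its multivariate Tutte polynomial with these weights. For a formal power series $F$ with constant term $1$, $F^q$ means $\exp(q\log F)$, a formal power series whose coefficients are polynomials in $q$. *)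

theory Defs
  imports Main
begin

text \<open>A formal power series in commuting indeterminates x_i (i :: 'v) with coefficients in 'a
  is represented by its coefficient function on exponent vectors n :: 'v \<Rightarrow> nat.\<close>

definition mfps_one :: "('v \<Rightarrow> nat) \<Rightarrow> 'a::comm_ring_1" where
  "mfps_one = (\<lambda>n. if n = (\<lambda>_. 0) then 1 else 0)"

definition mfps_mult :: "((('v::finite) \<Rightarrow> nat) \<Rightarrow> 'a) \<Rightarrow> (('v \<Rightarrow> nat) \<Rightarrow> 'a) \<Rightarrow> ('v \<Rightarrow> nat) \<Rightarrow> 'a::comm_ring_1"
  where "mfps_mult f g = (\<lambda>n. \<Sum>m\<in>{m. \<forall>i. m i \<le> n i}. f m * g (\<lambda>i. n i - m i))"

fun mfps_pow :: "((('v::finite) \<Rightarrow> nat) \<Rightarrow> 'a) \<Rightarrow> nat \<Rightarrow> ('v \<Rightarrow> nat) \<Rightarrow> 'a::comm_ring_1" where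
  "mfps_pow f 0 = mfps_one"
| "mfps_pow f (Suc k) = mfps_mult f (mfps_pow f k)"

definition mdeg :: "(('v::finite) \<Rightarrow> nat) \<Rightarrow> nat" where
  "mdeg n = (\<Sum>i\<in>UNIV. n i)"

text \<open>log F = \<Sum>_{k\<ge>1} (-1)^(k+1) (F-1)^k / k, for F with constant term 1.  Since (F-1)^k only has
  monomials of total degree \<ge> k, the coefficient at n is the finite sum over k \<le> deg n.\<close>
definition mfps_log :: "((('v::finite) \<Rightarrow> nat) \<Rightarrow> 'a::field_char_0) \<Rightarrow> ('v \<Rightarrow> nat) \<Rightarrow> 'a" where
  "mfps_log F = (\<lambda>n. \<Sum>k\<in>{1..mdeg n}.
      (-1) ^ (k + 1) / of_nat k * mfps_pow (\<lambda>m. F m - mfps_one m) k n)"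

text \<open>exp H = \<Sum>_{k\<ge>0} H^k / k!, for H with constant term 0 (finite coefficientwise as above).\<close>
definition mfps_exp :: "((('v::finite) \<Rightarrow> nat) \<Rightarrow> 'a::field_char_0) \<Rightarrow> ('v \<Rightarrow> nat) \<Rightarrow> 'a" where
  "mfps_exp H = (\<lambda>n. \<Sum>k\<le>mdeg n. mfps_pow H k n / fact k)"

definition mfps_powr :: "((('v::finite) \<Rightarrow> nat) \<Rightarrow> 'a::field_char_0) \<Rightarrow> 'a \<Rightarrow> ('v \<Rightarrow> nat) \<Rightarrow> 'a" where
  "mfps_powr F q = mfps_exp (\<lambda>n. q * mfps_log F n)"

text \<open>Number of connected components of the spanning subgraph (Vs, A); edges are 2-element sets.\<close>
definition num_comps :: "'u set \<Rightarrow> 'u set set \<Rightarrow> nat" where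
  "num_comps Vs A = card (Vs // ({(x, y). {x, y} \<in> A}\<^sup>* \<inter> Vs \<times> Vs))"

definition tutteZ :: "'u set \<Rightarrow> 'u set set \<Rightarrow> ('u set \<Rightarrow> 'a) \<Rightarrow> 'a \<Rightarrow> 'a::comm_ring_1" where
  "tutteZ Vs Es wt q = (\<Sum>A\<in>Pow Es. q ^ num_comps Vs A * (\<Prod>e\<in>A. wt e))"

definition blowV :: "('v \<Rightarrow> nat) \<Rightarrow> ('v \<times> nat) set" where
  "blowV n = {(i, a). a < n i}"

definition blowE :: "'v set set \<Rightarrow> ('v \<Rightarrow> nat) \<Rightarrow> ('v \<times> nat) set set" where
  "blowE E n = {{(i, a), (j, b)} | i j a b. {i, j} \<in> E \<and> a < n i \<and> b < n j}"

definition cliqueE :: "('v \<Rightarrow> nat) \<Rightarrow> ('v \<times> nat) set set" where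
  "cliqueE n = {{(i, a), (i, b)} | i a b. a < n i \<and> b < n i \<and> a \<noteq> b}"

text \<open>Weight of an edge of the blow-up: v_{ij} for an edge between blobs i \<noteq> j, w_i inside blob i.\<close>
definition blow_wt :: "('v set \<Rightarrow> 'a) \<Rightarrow> ('v \<Rightarrow> 'a) \<Rightarrow> ('v \<times> nat) set \<Rightarrow> 'a" where
  "blow_wt v w e = (if card (fst ` e) = 2 then v (fst ` e) else w (the_elem (fst ` e)))"

end

theory Submission
  imports Defs "HOL-Computational_Algebra.Formal_Power_Series" "HOL-Computational_Algebra.Polynomial" "HOL-Library.FuncSet"
begin
unbundle fps_syntax

lemma finite_mle: "finite {m::'v::finite\<Rightarrow>nat. \<forall>i. m i \<le> n i}"
proof -
  have "{m::'v\<Rightarrow>nat. \<forall>i. m i \<le> n i} = PiE UNIV (\<lambda>i. {..n i})"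
    by (auto simp: PiE_def extensional_def Pi_def)
  then show ?thesis by (simp add: finite_PiE)
qed

lemma mult_one_left: "mfps_mult mfps_one g = (g :: ('v::finite \<Rightarrow> nat) \<Rightarrow> 'a::comm_ring_1)"
proof
  fix n :: "'v \<Rightarrow> nat"
  have "mfps_mult mfps_one g n = (\<Sum>m\<in>{m. \<forall>i. m i \<le> n i}. if m = (\<lambda>_. 0) then g (\<lambda>i. n i - m i) else 0)"
    unfolding mfps_mult_def mfps_one_def by (intro sum.cong) auto
  also have "\<dots> = g n" by (subst sum.delta) (auto simp: finite_mle)
  finally show "mfps_mult mfps_one g n = g n" .
qed

lemma mult_one_right: "mfps_mult g mfps_one = (g :: ('v::finite \<Rightarrow> nat) \<Rightarrow> 'a::comm_ring_1)"
proof
  fix n :: "'v \<Rightarrow> nat"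
  have "mfps_mult g mfps_one n = (\<Sum>m\<in>{m. \<forall>i. m i \<le> n i}. if m = n then g m else 0)"
    unfolding mfps_mult_def mfps_one_def
  proof (intro sum.cong refl)
    fix m assume "m \<in> {m. \<forall>i. m i \<le> n i}"
    then have "(\<lambda>i. n i - m i) = (\<lambda>_. 0) \<longleftrightarrow> m = n"
      by (auto simp: fun_eq_iff intro: antisym)
    then show "g m * (if (\<lambda>i. n i - m i) = (\<lambda>_. 0) then 1 else 0) = (if m = n then g m else 0)"
      by simp
  qed
  also have "\<dots> = g n" by (subst sum.delta) (auto simp: finite_mle)
  finally show "mfps_mult g mfps_one n = g n" .
qed

lemma mult_assoc: "mfps_mult f (mfps_mult g h) = mfps_mult (mfps_mult f g) (h :: ('v::finite \<Rightarrow> nat) \<Rightarrow> 'a::comm_ring_1)"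
proof
  fix n :: "'v \<Rightarrow> nat"
  let ?S1 = "Sigma {m. \<forall>i. m i \<le> n i} (\<lambda>a. {b. \<forall>i. b i \<le> n i - a i})"
  let ?S2 = "Sigma {m. \<forall>i. m i \<le> n i} (\<lambda>c. {a. \<forall>i. a i \<le> c i})"
  have "mfps_mult f (mfps_mult g h) n = (\<Sum>(a,b)\<in>?S1. f a * (g b * h (\<lambda>i. n i - a i - b i)))"
    unfolding mfps_mult_def sum_distrib_left by (rule sum.Sigma) (auto simp: finite_mle)
  also have "\<dots> = (\<Sum>(c,a)\<in>?S2. (f a * g (\<lambda>i. c i - a i)) * h (\<lambda>i. n i - c i))"
    apply (rule sum.reindex_bij_witness[where i = "\<lambda>(c,a). (a, \<lambda>i. c i - a i)" and j = "\<lambda>(a,b). (\<lambda>i. a i + b i, a)"])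
    apply (auto simp: fun_eq_iff)
    apply (metis add.commute le_diff_conv2)
    apply (meson le_trans)
    apply (meson diff_le_mono)
    done
  also have "\<dots> = mfps_mult (mfps_mult f g) h n"
    unfolding mfps_mult_def sum_distrib_right by (rule sum.Sigma[symmetric]) (auto simp: finite_mle)
  finally show "mfps_mult f (mfps_mult g h) n = mfps_mult (mfps_mult f g) h n" .
qed

lemma mdeg_diff_less:
  fixes m n :: "'v::finite \<Rightarrow> nat"
  assumes "\<forall>i. m i \<le> n i" "m \<noteq> (\<lambda>_. 0)"
  shows "mdeg (\<lambda>i. n i - m i) < mdeg n"
proof -
  have "mdeg (\<lambda>i. n i - m i) + mdeg m = mdeg n"
    unfolding mdeg_def sum.distrib[symmetric] using assms(1) by (intro sum.cong) auto
  moreover have "mdeg m \<noteq> 0"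
    using assms(2) by (auto simp: mdeg_def fun_eq_iff)
  ultimately show ?thesis by linarith
qed

lemma mdeg_diff_le:
  fixes m n :: "'v::finite \<Rightarrow> nat"
  shows "mdeg (\<lambda>i. n i - m i) \<le> mdeg n"
  unfolding mdeg_def by (intro sum_mono) auto

lemma mdeg_le:
  fixes m n :: "'v::finite \<Rightarrow> nat"
  assumes "\<forall>i. m i \<le> n i"
  shows "mdeg m \<le> mdeg n"
  unfolding mdeg_def using assms by (intro sum_mono) auto

lemma mdeg_zero [simp]: "mdeg (\<lambda>_::'v::finite. 0) = 0"
  by (simp add: mdeg_def)

lemma pow_trunc:
  fixes G :: "('v::finite \<Rightarrow> nat) \<Rightarrow> 'a::comm_ring_1"
  assumes G0: "G (\<lambda>_. 0) = 0"
  shows "mdeg n < j \<Longrightarrow> mfps_pow G j n = 0"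
proof (induction j arbitrary: n)
  case 0 then show ?case by simp
next
  case (Suc j)
  have "mfps_pow G (Suc j) n = (\<Sum>m\<in>{m. \<forall>i. m i \<le> n i}. G m * mfps_pow G j (\<lambda>i. n i - m i))"
    by (simp add: mfps_mult_def)
  also have "\<dots> = 0"
  proof (intro sum.neutral ballI)
    fix m assume m: "m \<in> {m. \<forall>i. m i \<le> n i}"
    show "G m * mfps_pow G j (\<lambda>i. n i - m i) = 0"
    proof (cases "m = (\<lambda>_. 0)")
      case True then show ?thesis using G0 by simp
    next
      case False
      then have "mdeg (\<lambda>i. n i - m i) < j" using mdeg_diff_less[of m n] m Suc.prems by auto
      then show ?thesis using Suc.IH by simp
    qed
  qed
  finally show ?case .
qed

lemma pow_add: "mfps_pow G (a + b) = mfps_mult (mfps_pow G a) (mfps_pow (G :: ('v::finite \<Rightarrow> nat) \<Rightarrow> 'a::comm_ring_1) b)"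
  by (induction a) (simp_all add: mult_one_left mult_assoc)

lemma pow_one: "mfps_pow G 1 = (G :: ('v::finite \<Rightarrow> nat) \<Rightarrow> 'a::comm_ring_1)"
  by (simp add: mult_one_right)

lemma pow_nth_zero: fixes h :: "'a::idom fps" shows "h $ 0 = 0 \<Longrightarrow> i < j \<Longrightarrow> (h ^ j) $ i = 0"
proof (cases "h = 0")
  case True
  assume "i < j" then show ?thesis using True by (simp add: zero_power)
next
  case False
  assume h0: "h $ 0 = 0" and ij: "i < j"
  have "subdegree h \<noteq> 0" using False h0 by (simp add: subdegree_eq_0_iff)
  then have "j * 1 \<le> j * subdegree h" by (intro mult_le_mono2) simp
  then have "i < j * subdegree h" using ij by linarith
  then show ?thesis by (rule fps_pow_nth_below_subdegree)
qed


definition ssub :: "'a::comm_ring_1 fps \<Rightarrow> (('v::finite \<Rightarrow> nat) \<Rightarrow> 'a) \<Rightarrow> ('v \<Rightarrow> nat) \<Rightarrow> 'a" where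
  "ssub f G = (\<lambda>n. \<Sum>j\<le>mdeg n. f $ j * mfps_pow G j n)"

lemma ssubN:
  fixes G :: "('v::finite \<Rightarrow> nat) \<Rightarrow> 'a::comm_ring_1"
  assumes G0: "G (\<lambda>_. 0) = 0" and N: "mdeg n \<le> N"
  shows "ssub f G n = (\<Sum>j\<le>N. f $ j * mfps_pow G j n)"
  unfolding ssub_def
  by (rule sum.mono_neutral_left) (auto simp: pow_trunc[of G, OF G0] N)

lemma ssub_mult:
  fixes G :: "('v::finite \<Rightarrow> nat) \<Rightarrow> 'a::comm_ring_1"
  assumes G0: "G (\<lambda>_. 0) = 0"
  shows "ssub (f * g) G = mfps_mult (ssub f G) (ssub g G)"
proof
  fix n :: "'v \<Rightarrow> nat"
  define N where "N = mdeg n"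
  define M where "M = {m::'v\<Rightarrow>nat. \<forall>i. m i \<le> n i}"
  define H where "H = (\<lambda>a b. f$a * g$b * mfps_pow G (a+b) n)"
  have fM: "finite M" unfolding M_def by (rule finite_mle)
  have "mfps_mult (ssub f G) (ssub g G) n = (\<Sum>m\<in>M. (\<Sum>a\<le>N. f$a * mfps_pow G a m) * (\<Sum>b\<le>N. g$b * mfps_pow G b (\<lambda>i. n i - m i)))"
    unfolding mfps_mult_def N_def M_def
    by (intro sum.cong refl arg_cong2[where f="(*)"] ssubN[of G, OF G0] mdeg_le mdeg_diff_le) auto
  also have "\<dots> = (\<Sum>m\<in>M. \<Sum>a\<le>N. \<Sum>b\<le>N. (f$a * g$b) * (mfps_pow G a m * mfps_pow G b (\<lambda>i. n i - m i)))"
    by (simp add: sum_product mult_ac)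
  also have "\<dots> = (\<Sum>a\<le>N. \<Sum>b\<le>N. \<Sum>m\<in>M. (f$a * g$b) * (mfps_pow G a m * mfps_pow G b (\<lambda>i. n i - m i)))"
    by (subst sum.swap) (simp add: sum.swap[of _ M])
  also have "\<dots> = (\<Sum>a\<le>N. \<Sum>b\<le>N. H a b)"
    by (simp add: H_def sum_distrib_left[symmetric] pow_add mfps_mult_def M_def)
  also have "\<dots> = (\<Sum>(a,b)\<in>{..N} \<times> {..N}. H a b)"
    by (simp add: sum.cartesian_product)
  also have "\<dots> = (\<Sum>(a,b)\<in>{(a,b). a + b \<le> N}. H a b)"
  proof (rule sum.mono_neutral_right)
    have Hz: "H a b = 0" if "N < a + b" for a b
      using that pow_trunc[of G, OF G0, of n "a+b"] by (simp add: H_def N_def)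
    show "\<forall>i\<in>{..N} \<times> {..N} - {(a, b). a + b \<le> N}. (case i of (a, b) \<Rightarrow> H a b) = 0"
    proof
      fix p assume "p \<in> {..N} \<times> {..N} - {(a, b). a + b \<le> N}"
      then show "(case p of (a, b) \<Rightarrow> H a b) = 0" by (cases p) (auto intro!: Hz)
    qed
  qed auto
  also have "\<dots> = (\<Sum>k\<le>N. \<Sum>a\<le>k. H a (k - a))"
    by (rule sum.triangle_reindex_eq)
  also have "\<dots> = (\<Sum>k\<le>N. (f * g) $ k * mfps_pow G k n)"
    by (intro sum.cong refl) (simp add: H_def fps_mult_nth atLeast0AtMost sum_distrib_right)
  also have "\<dots> = ssub (f * g) G n" by (simp add: ssub_def N_def)
  finally show "ssub (f * g) G n = mfps_mult (ssub f G) (ssub g G) n" by simp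
qed

lemma ssub_one: "ssub 1 (G :: ('v::finite \<Rightarrow> nat) \<Rightarrow> 'a::comm_ring_1) = mfps_one"
proof
  fix n :: "'v \<Rightarrow> nat"
  have "ssub 1 G n = (\<Sum>j\<le>mdeg n. if j = 0 then mfps_pow G j n else 0)"
    unfolding ssub_def by (intro sum.cong) auto
  also have "\<dots> = mfps_one n" by (subst sum.delta) auto
  finally show "ssub 1 G n = mfps_one n" .
qed

lemma ssub_pow:
  fixes G :: "('v::finite \<Rightarrow> nat) \<Rightarrow> 'a::comm_ring_1"
  assumes G0: "G (\<lambda>_. 0) = 0"
  shows "ssub (h ^ j) G = mfps_pow (ssub h G) j"
  by (induction j) (simp_all add: ssub_one ssub_mult[of G, OF G0])

lemma ssub_zero_at0: "ssub h G (\<lambda>_. 0) = h $ 0"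
  by (simp add: ssub_def mfps_one_def)

lemma ssub_compose:
  fixes G :: "('v::finite \<Rightarrow> nat) \<Rightarrow> 'a::idom"
  assumes G0: "G (\<lambda>_. 0) = 0" and h0: "h $ 0 = 0"
  shows "ssub (f oo h) G = ssub f (ssub h G)"
proof
  fix n :: "'v \<Rightarrow> nat"
  define N where "N = mdeg n"
  have H0: "ssub h G (\<lambda>_. 0) = 0" using h0 by (simp add: ssub_zero_at0)
  have "ssub f (ssub h G) n = (\<Sum>j\<le>N. f$j * mfps_pow (ssub h G) j n)"
    by (simp only: ssub_def N_def)
  also have "\<dots> = (\<Sum>j\<le>N. f$j * ssub (h^j) G n)"
    by (simp only: ssub_pow[of G, OF G0])
  also have "\<dots> = (\<Sum>j\<le>N. f$j * (\<Sum>i\<le>N. (h^j)$i * mfps_pow G i n))"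
    by (intro sum.cong refl arg_cong2[where f="(*)"] ssubN[of G, OF G0]) (simp add: N_def)
  also have "\<dots> = (\<Sum>j\<le>N. \<Sum>i\<le>N. f$j * (h^j)$i * mfps_pow G i n)"
    by (simp add: sum_distrib_left mult.assoc)
  also have "\<dots> = (\<Sum>i\<le>N. \<Sum>j\<le>N. f$j * (h^j)$i * mfps_pow G i n)"
    by (rule sum.swap)
  also have "\<dots> = (\<Sum>i\<le>N. \<Sum>j\<le>i. f$j * (h^j)$i * mfps_pow G i n)"
    by (intro sum.cong refl sum.mono_neutral_right) (auto simp: pow_nth_zero[OF h0])
  also have "\<dots> = ssub (f oo h) G n"
    by (simp add: ssub_def N_def fps_compose_nth atLeast0AtMost sum_distrib_right)
  finally show "ssub (f oo h) G n = ssub f (ssub h G) n" by simp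
qed


lemma uni_exp_ln: "fps_exp (1::'a::field_char_0) oo (fps_const c * fps_ln 1) = fps_binomial c"
proof -
  let ?g = "fps_const c * fps_ln (1::'a)"
  have g0: "?g $ 0 = 0" by simp
  let ?a = "fps_exp 1 oo ?g"
  have d: "fps_deriv ?a = (fps_exp 1 oo ?g) * (fps_const c * inverse (1 + fps_X))"
    unfolding fps_compose_deriv[OF g0] fps_ln_deriv fps_deriv_mult_const_left by simp
  have u: "(1 + fps_X :: 'a fps) $ 0 \<noteq> 0" by simp
  have "fps_deriv ?a = fps_const c * ?a / (1 + fps_X)"
    unfolding d fps_divide_unit[OF u] by (simp only: ac_simps)
  moreover have "?a $ 0 = 1" by simp
  ultimately show ?thesis
    using fps_binomial_ODE_unique' by blast
qed

lemma ssub_cmult: "ssub (fps_const c * f) G n = c * ssub f G n"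
  by (simp add: ssub_def sum_distrib_left mult.assoc)

lemma ssub_exp: "ssub (fps_exp (1::'a::field_char_0)) H = mfps_exp (H :: ('v::finite \<Rightarrow> nat) \<Rightarrow> 'a)"
  by (rule ext) (simp add: ssub_def mfps_exp_def)

lemma log_eq:
  fixes F :: "('v::finite \<Rightarrow> nat) \<Rightarrow> 'a::field_char_0"
  shows "mfps_log F = ssub (fps_ln 1) (\<lambda>m. F m - mfps_one m)"
proof
  fix n :: "'v \<Rightarrow> nat"
  let ?G = "\<lambda>m. F m - mfps_one m :: 'a"
  have "ssub (fps_ln 1) ?G n = (\<Sum>j\<in>{0..mdeg n}. fps_ln 1 $ j * mfps_pow ?G j n)"
    by (simp add: ssub_def atLeast0AtMost)
  also have "\<dots> = (\<Sum>j\<in>{1..mdeg n}. fps_ln 1 $ j * mfps_pow ?G j n)"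
    by (subst sum.atLeast_Suc_atMost) simp_all
  also have "\<dots> = mfps_log F n"
    unfolding mfps_log_def
  proof (intro sum.cong refl)
    fix j assume "j \<in> {1..mdeg n}"
    then obtain j' where j: "j = Suc j'" by (cases j) auto
    show "fps_ln 1 $ j * mfps_pow ?G j n = (- 1) ^ (j + 1) / of_nat j * mfps_pow ?G j n"
      by (simp add: j fps_ln_nth)
  qed
  finally show "mfps_log F n = ssub (fps_ln 1) ?G n" by simp
qed

lemma powr_ssub:
  fixes F :: "('v::finite \<Rightarrow> nat) \<Rightarrow> 'a::field_char_0"
  assumes F0: "F (\<lambda>_. 0) = 1"
  shows "mfps_powr F q = ssub (fps_binomial q) (\<lambda>m. F m - mfps_one m)"
proof -
  define G where "G = (\<lambda>m. F m - mfps_one m)"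
  have G0: "G (\<lambda>_. 0) = 0" using F0 by (simp add: G_def mfps_one_def)
  have "(\<lambda>n. q * mfps_log F n) = ssub (fps_const q * fps_ln 1) G"
    by (rule ext) (simp add: ssub_cmult log_eq G_def)
  then have "mfps_powr F q = ssub (fps_exp 1) (ssub (fps_const q * fps_ln 1) G)"
    by (simp add: mfps_powr_def ssub_exp)
  also have "\<dots> = ssub (fps_exp 1 oo (fps_const q * fps_ln 1)) G"
    by (rule ssub_compose[of G, OF G0, symmetric]) simp
  also have "\<dots> = ssub (fps_binomial q) G" by (simp add: uni_exp_ln)
  finally show ?thesis by (simp add: G_def)
qed

lemma powr_nat:
  fixes F :: "('v::finite \<Rightarrow> nat) \<Rightarrow> 'a::field_char_0"
  assumes F0: "F (\<lambda>_. 0) = 1"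
  shows "mfps_powr F (of_nat k) = mfps_pow F k"
proof -
  define G where "G = (\<lambda>m. F m - mfps_one m)"
  have G0: "G (\<lambda>_. 0) = 0" using F0 by (simp add: G_def mfps_one_def)
  have X: "ssub (1 + fps_X) G = F"
  proof
    fix n :: "'v \<Rightarrow> nat"
    have "ssub (1 + fps_X) G n = (\<Sum>j\<le>Suc (mdeg n). (1 + fps_X) $ j * mfps_pow G j n)"
      by (rule ssubN[of G, OF G0]) simp
    also have "\<dots> = (\<Sum>j\<le>Suc (mdeg n). (if j = 0 then mfps_pow G j n else 0) + (if j = 1 then mfps_pow G j n else 0))"
      by (intro sum.cong refl) (auto simp: fps_X_nth)
    also have "\<dots> = mfps_one n + G n"
      by (simp add: sum.distrib mult_one_right)
    also have "\<dots> = F n" by (simp add: G_def)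
    finally show "ssub (1 + fps_X) G n = F n" .
  qed
  have "mfps_powr F (of_nat k) = ssub ((1 + fps_X) ^ k) G"
    by (simp add: powr_ssub[of F, OF F0] fps_binomial_of_nat G_def)
  also have "\<dots> = mfps_pow F k" by (simp add: ssub_pow[of G, OF G0] X)
  finally show ?thesis .
qed

lemma pow_scale: "mfps_pow (\<lambda>m. q * L m) k = (\<lambda>m. q ^ k * mfps_pow (L :: ('v::finite \<Rightarrow> nat) \<Rightarrow> 'a::comm_ring_1) k m)"
  by (induction k) (auto simp: mfps_mult_def sum_distrib_left mult_ac fun_eq_iff)

lemma powr_poly:
  fixes F :: "('v::finite \<Rightarrow> nat) \<Rightarrow> 'a::field_char_0"
  shows "mfps_powr F q n = poly (\<Sum>j\<le>mdeg n. monom (mfps_pow (mfps_log F) j n / fact j) j) q"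
  by (simp add: mfps_powr_def mfps_exp_def pow_scale poly_sum poly_monom mult_ac)

lemma poly_agree:
  fixes P Q :: "'a::field_char_0 \<Rightarrow> 'a"
  assumes "\<And>q. P q = poly p1 q" "\<And>q. Q q = poly p2 q" "\<And>k::nat. P (of_nat k) = Q (of_nat k)"
  shows "P q = Q q"
proof -
  have "p1 - p2 = 0"
  proof (rule ccontr)
    assume ne: "p1 - p2 \<noteq> 0"
    have "range (of_nat :: nat \<Rightarrow> 'a) \<subseteq> {x. poly (p1 - p2) x = 0}"
      using assms by auto
    moreover have "infinite (range (of_nat :: nat \<Rightarrow> 'a))"
      by (rule range_inj_infinite) (simp add: inj_on_def)
    ultimately have "infinite {x. poly (p1 - p2) x = 0}" using finite_subset by blast
    then show False using poly_roots_finite[OF ne] by simp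
  qed
  then have "poly p1 q = poly p2 q" by (metis eq_iff_diff_eq_0 poly_diff poly_0)
  then show ?thesis using assms by simp
qed


lemma card_colorings:
  fixes Vs :: "'u set" and A :: "'u set set"
  assumes fin: "finite Vs" and A: "\<forall>e\<in>A. \<exists>x y. e = {x,y} \<and> x \<in> Vs \<and> y \<in> Vs"
  shows "card {c \<in> Vs \<rightarrow>\<^sub>E {0..<k}. \<forall>e\<in>A. \<forall>x\<in>e. \<forall>y\<in>e. c x = c y} = k ^ num_comps Vs A"
proof -
  define B where "B = {(x, y). {x, y} \<in> A}"
  define R where "R = B\<^sup>* \<inter> Vs \<times> Vs"
  have symB: "sym B" unfolding B_def sym_def by (auto simp: insert_commute)
  have eq: "equiv Vs R"
    unfolding R_def
  proof (rule equivI)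
    show "refl_on Vs (B\<^sup>* \<inter> Vs \<times> Vs)" by (auto simp: refl_on_def)
    show "sym (B\<^sup>* \<inter> Vs \<times> Vs)" using sym_rtrancl[OF symB] by (auto simp: sym_def)
    show "trans (B\<^sup>* \<inter> Vs \<times> Vs)" by (auto simp: trans_def intro: rtrancl_trans)
  qed auto
  have closed: "y \<in> Vs" if "(x, y) \<in> B\<^sup>*" "x \<in> Vs" for x y
    using that
  proof (induction rule: rtrancl_induct)
    case (step y z)
    then have "{y, z} \<in> A" by (simp add: B_def)
    then obtain a b where "{y,z} = {a,b}" "a \<in> Vs" "b \<in> Vs" using A by blast
    then show ?case by (metis insertCI insertE singletonD)
  qed simp
  have resp: "(\<forall>e\<in>A. \<forall>x\<in>e. \<forall>y\<in>e. c x = c y) \<longleftrightarrow> (\<forall>(x,y)\<in>R. c x = c y)" for c :: "'u \<Rightarrow> nat"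
  proof
    assume H: "\<forall>e\<in>A. \<forall>x\<in>e. \<forall>y\<in>e. c x = c y"
    have "c x = c y" if "(x, y) \<in> B\<^sup>*" for x y
      using that
    proof (induction rule: rtrancl_induct)
      case (step y z)
      then have "{y, z} \<in> A" by (simp add: B_def)
      then have "c y = c z" using H[rule_format, of "{y,z}" y z] by simp
      then show ?case using step by simp
    qed simp
    then show "\<forall>(x,y)\<in>R. c x = c y" by (auto simp: R_def)
  next
    assume H: "\<forall>(x,y)\<in>R. c x = c y"
    show "\<forall>e\<in>A. \<forall>x\<in>e. \<forall>y\<in>e. c x = c y"
    proof (intro ballI)
      fix e x y assume e: "e \<in> A" and x: "x \<in> e" and y: "y \<in> e"
      obtain a b where ab: "e = {a,b}" "a \<in> Vs" "b \<in> Vs" using A e by blast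
      show "c x = c y"
      proof (cases "x = y")
        case False
        then have "{x, y} = e" using ab x y by auto
        then have "(x, y) \<in> B" using e by (simp add: B_def)
        moreover have "x \<in> Vs" "y \<in> Vs" using ab x y by auto
        ultimately have "(x, y) \<in> R" by (auto simp: R_def)
        then show ?thesis using H by auto
      qed simp
    qed
  qed
  define \<psi> where "\<psi> = (\<lambda>g. \<lambda>x\<in>Vs. g (R``{x}) :: nat)"
  have bij: "bij_betw \<psi> (Vs//R \<rightarrow>\<^sub>E {0..<k}) {c \<in> Vs \<rightarrow>\<^sub>E {0..<k}. \<forall>(x,y)\<in>R. c x = c y}"
    unfolding bij_betw_def
  proof (intro conjI)
    show "inj_on \<psi> (Vs//R \<rightarrow>\<^sub>E {0..<k})"
    proof (rule inj_onI)
      fix g1 g2 assume g1: "g1 \<in> Vs//R \<rightarrow>\<^sub>E {0..<k}" and g2: "g2 \<in> Vs//R \<rightarrow>\<^sub>E {0..<k}" and e: "\<psi> g1 = \<psi> g2"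
      show "g1 = g2"
      proof (rule PiE_ext[OF g1 g2])
        fix X assume "X \<in> Vs//R"
        then obtain x where X: "X = R``{x}" "x \<in> Vs" by (rule quotientE)
        have "\<psi> g1 x = \<psi> g2 x" using e by simp
        then show "g1 X = g2 X" using X by (simp add: \<psi>_def)
      qed
    qed
    show "\<psi> ` (Vs//R \<rightarrow>\<^sub>E {0..<k}) = {c \<in> Vs \<rightarrow>\<^sub>E {0..<k}. \<forall>(x,y)\<in>R. c x = c y}"
    proof (intro equalityI subsetI)
      fix c assume "c \<in> \<psi> ` (Vs//R \<rightarrow>\<^sub>E {0..<k})"
      then obtain g where g: "g \<in> Vs//R \<rightarrow>\<^sub>E {0..<k}" and c: "c = \<psi> g" by blast
      have "c \<in> Vs \<rightarrow>\<^sub>E {0..<k}" using g quotientI[of _ Vs R] by (auto simp: c \<psi>_def PiE_def Pi_def)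
      moreover have "\<forall>(x,y)\<in>R. c x = c y"
      proof (clarify)
        fix x y assume xy: "(x, y) \<in> R"
        then have "R``{x} = R``{y}" "x \<in> Vs" "y \<in> Vs" using equiv_class_eq_iff[OF eq] by auto
        then show "c x = c y" by (simp add: c \<psi>_def)
      qed
      ultimately show "c \<in> {c \<in> Vs \<rightarrow>\<^sub>E {0..<k}. \<forall>(x,y)\<in>R. c x = c y}" by simp
    next
      fix c assume c: "c \<in> {c \<in> Vs \<rightarrow>\<^sub>E {0..<k}. \<forall>(x,y)\<in>R. c x = c y}"
      define g where "g = (\<lambda>X\<in>Vs//R. c (SOME x. x \<in> X))"
      have some: "(x, SOME y. y \<in> R``{x}) \<in> R" if "x \<in> Vs" for x
      proof -
        have "x \<in> R``{x}" using equiv_class_self[OF eq that] .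
        then have "(SOME y. y \<in> R``{x}) \<in> R``{x}" by (rule someI)
        then show ?thesis by simp
      qed
      have "g \<in> Vs//R \<rightarrow>\<^sub>E {0..<k}"
      proof -
        have "c (SOME x. x \<in> X) \<in> {0..<k}" if "X \<in> Vs//R" for X
        proof -
          obtain x where X: "X = R``{x}" "x \<in> Vs" using \<open>X \<in> Vs//R\<close> by (rule quotientE)
          have "(SOME y. y \<in> R``{x}) \<in> Vs" using some[OF X(2)] by (auto simp: R_def)
          then show ?thesis using c X by (auto simp: PiE_def Pi_def)
        qed
        then show ?thesis by (auto simp: g_def)
      qed
      moreover have "\<psi> g = c"
      proof (rule PiE_ext)
        show "\<psi> g \<in> Vs \<rightarrow>\<^sub>E UNIV" by (simp add: \<psi>_def)
        show "c \<in> Vs \<rightarrow>\<^sub>E UNIV" using c by (auto simp: PiE_def)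
        fix x assume x: "x \<in> Vs"
        have "c (SOME y. y \<in> R``{x}) = c x" using some[OF x] c by auto
        then show "\<psi> g x = c x" using x quotientI[OF x, of R] by (simp add: \<psi>_def g_def)
      qed
      ultimately show "c \<in> \<psi> ` (Vs//R \<rightarrow>\<^sub>E {0..<k})" by blast
    qed
  qed
  have finq: "finite (Vs//R)" by (rule finite_quotient[OF fin]) (auto simp: R_def)
  have "card {c \<in> Vs \<rightarrow>\<^sub>E {0..<k}. \<forall>e\<in>A. \<forall>x\<in>e. \<forall>y\<in>e. c x = c y}
      = card {c \<in> Vs \<rightarrow>\<^sub>E {0..<k}. \<forall>(x,y)\<in>R. c x = c y}"
    using resp by simp
  also have "\<dots> = card (Vs//R \<rightarrow>\<^sub>E {0..<k})" using bij_betw_same_card[OF bij] by simp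
  also have "\<dots> = k ^ card (Vs//R)" by (simp add: card_PiE[OF finq])
  also have "card (Vs//R) = num_comps Vs A" by (simp add: num_comps_def R_def B_def)
  finally show ?thesis .
qed

lemma tutte_nat:
  fixes Vs :: "'u set" and Es :: "'u set set" and wt :: "'u set \<Rightarrow> 'a::comm_ring_1"
  assumes fin: "finite Vs" and E: "\<forall>e\<in>Es. \<exists>x y. e = {x,y} \<and> x \<in> Vs \<and> y \<in> Vs"
  shows "tutteZ Vs Es wt (of_nat k) = (\<Sum>c \<in> Vs \<rightarrow>\<^sub>E {0..<k}. \<Prod>e\<in>{e\<in>Es. \<forall>x\<in>e. \<forall>y\<in>e. c x = c y}. 1 + wt e)"
proof -
  have finE: "finite Es"
  proof (rule finite_subset)
    show "Es \<subseteq> Pow Vs" using E by auto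
  qed (simp add: fin)
  define C where "C = Vs \<rightarrow>\<^sub>E {0..<k}"
  have finC: "finite C" unfolding C_def by (simp add: finite_PiE fin)
  have "tutteZ Vs Es wt (of_nat k) = (\<Sum>A\<in>Pow Es. of_nat (card {c \<in> C. \<forall>e\<in>A. \<forall>x\<in>e. \<forall>y\<in>e. c x = c y}) * (\<Prod>e\<in>A. wt e))"
    unfolding tutteZ_def C_def
  proof (intro sum.cong refl)
    fix A assume "A \<in> Pow Es"
    then have "\<forall>e\<in>A. \<exists>x y. e = {x,y} \<and> x \<in> Vs \<and> y \<in> Vs" using E by auto
    then show "of_nat k ^ num_comps Vs A * (\<Prod>e\<in>A. wt e) = of_nat (card {c \<in> Vs \<rightarrow>\<^sub>E {0..<k}. \<forall>e\<in>A. \<forall>x\<in>e. \<forall>y\<in>e. c x = c y}) * (\<Prod>e\<in>A. wt e)"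
      by (simp add: card_colorings[OF fin] of_nat_power)
  qed
  also have "\<dots> = (\<Sum>A\<in>Pow Es. \<Sum>c\<in>{c. c \<in> C \<and> (\<forall>e\<in>A. \<forall>x\<in>e. \<forall>y\<in>e. c x = c y)}. \<Prod>e\<in>A. wt e)"
    by simp
  also have "\<dots> = (\<Sum>c\<in>C. \<Sum>A\<in>{A. A \<in> Pow Es \<and> (\<forall>e\<in>A. \<forall>x\<in>e. \<forall>y\<in>e. c x = c y)}. \<Prod>e\<in>A. wt e)"
    by (rule sum.swap_restrict) (simp_all add: finE finC)
  also have "\<dots> = (\<Sum>c\<in>C. \<Prod>e\<in>{e\<in>Es. \<forall>x\<in>e. \<forall>y\<in>e. c x = c y}. 1 + wt e)"
  proof (intro sum.cong refl)
    fix c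
    have "{A. A \<in> Pow Es \<and> (\<forall>e\<in>A. \<forall>x\<in>e. \<forall>y\<in>e. c x = c y)} = Pow {e\<in>Es. \<forall>x\<in>e. \<forall>y\<in>e. c x = c y}"
      by auto
    moreover have "(\<Prod>e\<in>{e\<in>Es. \<forall>x\<in>e. \<forall>y\<in>e. c x = c y}. wt e + 1) = (\<Sum>X\<in>Pow {e\<in>Es. \<forall>x\<in>e. \<forall>y\<in>e. c x = c y}. (\<Prod>e\<in>X. wt e))"
      using prod_add[of "{e\<in>Es. \<forall>x\<in>e. \<forall>y\<in>e. c x = c y}" wt "\<lambda>_. 1"] finE by simp
    ultimately show "(\<Sum>A\<in>{A. A \<in> Pow Es \<and> (\<forall>e\<in>A. \<forall>x\<in>e. \<forall>y\<in>e. c x = c y)}. \<Prod>e\<in>A. wt e) = (\<Prod>e\<in>{e\<in>Es. \<forall>x\<in>e. \<forall>y\<in>e. c x = c y}. 1 + wt e)"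
      by (simp add: add.commute)
  qed
  finally show ?thesis by (simp add: C_def)
qed


definition edg :: "bool \<Rightarrow> 'v set set \<Rightarrow> ('v \<times> nat) set \<Rightarrow> ('v \<times> nat) set set" where
  "edg b E U = {{x, y} | x y. x \<in> U \<and> y \<in> U \<and> ({fst x, fst y} \<in> E \<or> (b \<and> fst x = fst y \<and> x \<noteq> y))}"

definition cnt :: "('v \<times> nat) set \<Rightarrow> 'v \<Rightarrow> nat" where
  "cnt U = (\<lambda>i. card {x\<in>U. fst x = i})"

definition Wf :: "bool \<Rightarrow> 'v set set \<Rightarrow> ('v set \<Rightarrow> 'a) \<Rightarrow> ('v \<Rightarrow> 'a) \<Rightarrow> (('v::finite) \<Rightarrow> nat) \<Rightarrow> 'a::comm_ring_1" where
  "Wf b E v w m = (\<Prod>e\<in>E. (1 + v e) ^ (\<Prod>i\<in>e. m i)) * (if b then \<Prod>i\<in>UNIV. (1 + w i) ^ (m i * (m i - 1) div 2) else 1)"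

lemma edgI:
  assumes "x \<in> U" "y \<in> U" "{fst x, fst y} \<in> E \<or> (b \<and> fst x = fst y \<and> x \<noteq> y)"
  shows "{x, y} \<in> edg b E U"
  unfolding edg_def mem_Collect_eq by (intro exI[of _ x] exI[of _ y]) (simp add: assms)

lemma edgE:
  assumes "e \<in> edg b E U"
  obtains x y where "e = {x,y}" "x \<in> U" "y \<in> U" "{fst x, fst y} \<in> E \<or> (b \<and> fst x = fst y \<and> x \<noteq> y)"
  using assms unfolding edg_def by blast

lemma finite_edg: "finite U \<Longrightarrow> finite (edg b E U)"
  by (rule finite_subset[of _ "Pow U"]) (auto simp: edg_def)

lemma edg_bE:
  fixes U :: "('v \<times> nat) set"
  assumes simple: "\<forall>e\<in>E. card e = 2"
  shows "{{x, y} | x y. x \<in> U \<and> y \<in> U \<and> {fst x, fst y} \<in> E} \<inter> {{x, y} | x y. x \<in> U \<and> y \<in> U \<and> fst x = fst y \<and> x \<noteq> y} = {}"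
proof (rule ccontr)
  assume "{{x, y} | x y. x \<in> U \<and> y \<in> U \<and> {fst x, fst y} \<in> E} \<inter> {{x, y} | x y. x \<in> U \<and> y \<in> U \<and> fst x = fst y \<and> x \<noteq> y} \<noteq> {}"
  then obtain e where "e \<in> {{x, y} | x y. x \<in> U \<and> y \<in> U \<and> {fst x, fst y} \<in> E}"
     "e \<in> {{x, y} | x y. x \<in> U \<and> y \<in> U \<and> fst x = fst y \<and> x \<noteq> y}" by blast
  then obtain x y x' y' where e: "e = {x,y}" "{fst x, fst y} \<in> E" "e = {x',y'}" "fst x' = fst y'"
    by blast
  then have e: "{x,y} = {x',y'}" "{fst x, fst y} \<in> E" "fst x' = fst y'" by auto
  have "fst x = fst y" using e(1,3) by (auto simp: doubleton_eq_iff)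
  then have "card {fst x, fst y} = 1" by simp
  then show False using simple e(2) by fastforce
qed

lemma prod_bE:
  fixes U :: "('v::finite \<times> nat) set" and v :: "'v set \<Rightarrow> 'a::comm_ring_1"
  assumes fin: "finite U" and simple: "\<forall>e\<in>E. card e = 2"
  shows "(\<Prod>e\<in>{{x, y} | x y. x \<in> U \<and> y \<in> U \<and> {fst x, fst y} \<in> E}. 1 + blow_wt v w e)
         = (\<Prod>e\<in>E. (1 + v e) ^ (\<Prod>i\<in>e. cnt U i))"
proof -
  define bE where "bE = {{x, y} | x y. x \<in> U \<and> y \<in> U \<and> {fst x, fst y} \<in> E}"
  define P where "P = (\<lambda>e0. {e\<in>bE. fst ` e = e0})"
  have finE: "finite E" by (rule finite_subset[of _ "Pow UNIV"]) auto
  have finbE: "finite bE" by (rule finite_subset[of _ "Pow U"]) (auto simp: bE_def fin)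
  have bE_eq: "bE = (\<Union>e0\<in>E. P e0)"
  proof (intro equalityI subsetI)
    fix e assume e: "e \<in> bE"
    then obtain x y where "e = {x,y}" "{fst x, fst y} \<in> E" unfolding bE_def by blast
    then have "fst ` e \<in> E" by simp
    then show "e \<in> (\<Union>e0\<in>E. P e0)" using e unfolding P_def by blast
  next
    fix e assume "e \<in> (\<Union>e0\<in>E. P e0)" then show "e \<in> bE" unfolding P_def by blast
  qed
  have "(\<Prod>e\<in>bE. 1 + blow_wt v w e) = (\<Prod>e0\<in>E. \<Prod>e\<in>P e0. 1 + blow_wt v w e)"
    unfolding bE_eq
    by (rule prod.UNION_disjoint) (auto simp: finE P_def intro: finite_subset[OF _ finbE])
  also have "\<dots> = (\<Prod>e0\<in>E. (1 + v e0) ^ (\<Prod>i\<in>e0. cnt U i))"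
  proof (rule prod.cong[OF refl])
    fix e0 assume e0: "e0 \<in> E"
    then obtain i j where ij: "e0 = {i, j}" "i \<noteq> j" using simple card_2_iff by metis
    have wt: "blow_wt v w e = v e0" if "e \<in> P e0" for e
      using that e0 simple by (auto simp: P_def blow_wt_def)
    define Ui where "Ui = {x\<in>U. fst x = i}"
    define Uj where "Uj = {x\<in>U. fst x = j}"
    have Peq: "P e0 = (\<lambda>(x,y). {x,y}) ` (Ui \<times> Uj)"
    proof (intro equalityI subsetI)
      fix e assume "e \<in> P e0"
      then obtain x y where e: "e = {x,y}" "x \<in> U" "y \<in> U" "{fst x, fst y} = {i, j}"
        unfolding P_def bE_def ij by auto
      then show "e \<in> (\<lambda>(x,y). {x,y}) ` (Ui \<times> Uj)"
      proof (cases "fst x = i")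
        case True
        then have "fst y = j" using e(4) ij(2) by (auto simp: doubleton_eq_iff)
        then have "(x, y) \<in> Ui \<times> Uj" using True e by (auto simp: Ui_def Uj_def)
        then show ?thesis using e(1) by (intro image_eqI[where x="(x,y)"]) auto
      next
        case False
        then have "fst x = j" "fst y = i" using e(4) by (auto simp: doubleton_eq_iff)
        then have "(y, x) \<in> Ui \<times> Uj" using e by (auto simp: Ui_def Uj_def)
        moreover have "e = {y, x}" using e by auto
        ultimately show ?thesis by (intro image_eqI[where x="(y,x)"]) auto
      qed
    next
      fix e assume "e \<in> (\<lambda>(x,y). {x,y}) ` (Ui \<times> Uj)"
      then obtain x y where xy: "e = {x,y}" "x \<in> Ui" "y \<in> Uj" by auto
      then have xy2: "x \<in> U" "y \<in> U" "fst x = i" "fst y = j" by (auto simp: Ui_def Uj_def)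
      have "e \<in> bE" unfolding bE_def mem_Collect_eq
        by (intro exI[of _ x] exI[of _ y]) (use xy xy2 e0 ij in auto)
      moreover have "fst ` e = e0" using xy xy2 ij by auto
      ultimately show "e \<in> P e0" by (simp add: P_def)
    qed
    have inj: "inj_on (\<lambda>(x,y). {x,y}) (Ui \<times> Uj)"
    proof (rule inj_onI, clarify)
      fix x y x' y' assume "x \<in> Ui" "y \<in> Uj" "x' \<in> Ui" "y' \<in> Uj" "{x, y} = {x', y'}"
      then show "x = x' \<and> y = y'" using ij(2) by (auto simp: Ui_def Uj_def doubleton_eq_iff)
    qed
    have "card (P e0) = cnt U i * cnt U j"
      unfolding Peq card_image[OF inj] by (simp add: card_cartesian_product cnt_def Ui_def Uj_def)
    also have "\<dots> = (\<Prod>i\<in>e0. cnt U i)" using ij by simp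
    finally have cP: "card (P e0) = (\<Prod>i\<in>e0. cnt U i)" .
    have "(\<Prod>e\<in>P e0. 1 + blow_wt v w e) = (\<Prod>e\<in>P e0. 1 + v e0)"
      by (intro prod.cong refl) (simp add: wt)
    also have "\<dots> = (1 + v e0) ^ (\<Prod>i\<in>e0. cnt U i)" by (simp add: cP)
    finally show "(\<Prod>e\<in>P e0. 1 + blow_wt v w e) = (1 + v e0) ^ (\<Prod>i\<in>e0. cnt U i)" .
  qed
  finally show ?thesis by (simp add: bE_def)
qed

lemma prod_cE:
  fixes U :: "('v::finite \<times> nat) set" and w :: "'v \<Rightarrow> 'a::comm_ring_1"
  assumes fin: "finite U"
  shows "(\<Prod>e\<in>{{x, y} | x y. x \<in> U \<and> y \<in> U \<and> fst x = fst y \<and> x \<noteq> y}. 1 + blow_wt v w e)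
         = (\<Prod>i\<in>UNIV. (1 + w i) ^ (cnt U i * (cnt U i - 1) div 2))"
proof -
  define Q where "Q = (\<lambda>i. {S. S \<subseteq> {x\<in>U. fst x = i} \<and> card S = 2})"
  have eq: "{{x, y} | x y. x \<in> U \<and> y \<in> U \<and> fst x = fst y \<and> x \<noteq> y} = (\<Union>i\<in>UNIV. Q i)"
  proof (intro equalityI subsetI)
    fix e assume "e \<in> {{x, y} | x y. x \<in> U \<and> y \<in> U \<and> fst x = fst y \<and> x \<noteq> y}"
    then obtain x y where "e = {x,y}" "x \<in> U" "y \<in> U" "fst x = fst y" "x \<noteq> y" by auto
    then have "e \<in> Q (fst x)" by (auto simp: Q_def)
    then show "e \<in> (\<Union>i\<in>UNIV. Q i)" by auto
  next
    fix e assume "e \<in> (\<Union>i\<in>UNIV. Q i)"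
    then obtain i where ei: "e \<subseteq> {x\<in>U. fst x = i}" "card e = 2" by (auto simp: Q_def)
    then obtain x y where xy: "e = {x,y}" "x \<noteq> y" by (auto simp: card_2_iff)
    then have "x \<in> U" "y \<in> U" "fst x = fst y" using ei(1) by auto
    then show "e \<in> {{x, y} | x y. x \<in> U \<and> y \<in> U \<and> fst x = fst y \<and> x \<noteq> y}"
      using xy by blast
  qed
  have finQ: "finite (Q i)" for i
    by (rule finite_subset[of _ "Pow U"]) (auto simp: Q_def fin)
  have disj: "Q i \<inter> Q j = {}" if "i \<noteq> j" for i j
  proof (rule ccontr)
    assume "Q i \<inter> Q j \<noteq> {}"
    then obtain S where "S \<subseteq> {x\<in>U. fst x = i}" "S \<subseteq> {x\<in>U. fst x = j}" "card S = 2" by (auto simp: Q_def)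
    then show False using that by (auto simp: card_2_iff)
  qed
  have "(\<Prod>e\<in>(\<Union>i\<in>UNIV. Q i). 1 + blow_wt v w e) = (\<Prod>i\<in>UNIV. \<Prod>e\<in>Q i. 1 + blow_wt v w e)"
    by (rule prod.UNION_disjoint) (auto simp: finQ disj)
  also have "\<dots> = (\<Prod>i\<in>UNIV. (1 + w i) ^ (cnt U i * (cnt U i - 1) div 2))"
  proof (rule prod.cong[OF refl])
    fix i :: 'v
    have wt: "blow_wt v w e = w i" if "e \<in> Q i" for e
    proof -
      from that obtain x y where "e = {x,y}" "fst x = i" "fst y = i" by (auto simp: Q_def card_2_iff)
      then have "fst ` e = {i}" by auto
      then show ?thesis by (simp add: blow_wt_def)
    qed
    have cQ: "card (Q i) = cnt U i * (cnt U i - 1) div 2"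
      unfolding Q_def cnt_def by (simp add: n_subsets fin choose_two)
    have "(\<Prod>e\<in>Q i. 1 + blow_wt v w e) = (\<Prod>e\<in>Q i. 1 + w i)"
      by (intro prod.cong refl) (simp add: wt)
    then show "(\<Prod>e\<in>Q i. 1 + blow_wt v w e) = (1 + w i) ^ (cnt U i * (cnt U i - 1) div 2)"
      by (simp add: cQ)
  qed
  finally show ?thesis by (simp only: eq)
qed

lemma prod_edg:
  fixes U :: "('v::finite \<times> nat) set" and v :: "'v set \<Rightarrow> 'a::comm_ring_1"
  assumes fin: "finite U" and simple: "\<forall>e\<in>E. card e = 2"
  shows "(\<Prod>e\<in>edg b E U. 1 + blow_wt v w e) = Wf b E v w (cnt U)"
proof -
  define bE where "bE = {{x, y} | x y. x \<in> U \<and> y \<in> U \<and> {fst x, fst y} \<in> E}"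
  define cE where "cE = {{x, y} | x y. x \<in> U \<and> y \<in> U \<and> fst x = fst y \<and> x \<noteq> y}"
  have eb: "edg b E U = bE \<union> (if b then cE else {})" "bE \<inter> cE = {}"
    using edg_bE[OF simple, of U] unfolding bE_def cE_def edg_def by auto
  have fb: "finite bE" "finite cE"
    by (rule finite_subset[of _ "Pow U"], auto simp: bE_def cE_def fin)+
  show ?thesis
  proof (cases b)
    case True
    have "(\<Prod>e\<in>edg b E U. 1 + blow_wt v w e) = (\<Prod>e\<in>bE. 1 + blow_wt v w e) * (\<Prod>e\<in>cE. 1 + blow_wt v w e)"
      unfolding eb(1) using True fb eb(2) by (simp add: prod.union_disjoint)
    then show ?thesis using True prod_bE[OF fin simple, of v w] prod_cE[OF fin, of v w]
      by (simp add: Wf_def bE_def cE_def)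
  next
    case False
    then show ?thesis using prod_bE[OF fin simple, of v w] eb(1)
      by (simp add: Wf_def bE_def)
  qed
qed

lemma mono_split:
  fixes U :: "('v \<times> nat) set" and wt :: "('v \<times> nat) set \<Rightarrow> 'a::comm_ring_1" and c :: "'v \<times> nat \<Rightarrow> nat"
  assumes fin: "finite U" and c: "c \<in> U \<rightarrow>\<^sub>E {0..<k}"
  shows "(\<Prod>e\<in>{e\<in>edg b E U. \<forall>x\<in>e. \<forall>y\<in>e. c x = c y}. wt e) = (\<Prod>l<k. \<Prod>e\<in>edg b E {x\<in>U. c x = l}. wt e)"
proof -
  have eq: "{e\<in>edg b E U. \<forall>x\<in>e. \<forall>y\<in>e. c x = c y} = (\<Union>l\<in>{..<k}. edg b E {x\<in>U. c x = l})"
  proof (intro equalityI subsetI)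
    fix e assume "e \<in> {e\<in>edg b E U. \<forall>x\<in>e. \<forall>y\<in>e. c x = c y}"
    then obtain x y where e: "e = {x,y}" "x \<in> U" "y \<in> U" "{fst x, fst y} \<in> E \<or> (b \<and> fst x = fst y \<and> x \<noteq> y)" "c x = c y"
      by (auto elim!: edgE)
    have "c x < k" using PiE_mem[OF c e(2)] by simp
    moreover have "e \<in> edg b E {z\<in>U. c z = c x}" unfolding e(1) using e by (intro edgI) auto
    ultimately show "e \<in> (\<Union>l\<in>{..<k}. edg b E {x\<in>U. c x = l})" by auto
  next
    fix e assume "e \<in> (\<Union>l\<in>{..<k}. edg b E {x\<in>U. c x = l})"
    then obtain l where "e \<in> edg b E {x\<in>U. c x = l}" by blast
    then obtain x y where xy: "e = {x,y}" "x \<in> U" "y \<in> U" "c x = l" "c y = l" "{fst x, fst y} \<in> E \<or> (b \<and> fst x = fst y \<and> x \<noteq> y)"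
      by (auto elim!: edgE)
    have "e \<in> edg b E U" unfolding xy(1) using xy by (intro edgI) auto
    then show "e \<in> {e\<in>edg b E U. \<forall>x\<in>e. \<forall>y\<in>e. c x = c y}" using xy by auto
  qed
  have disj: "edg b E {x\<in>U. c x = l} \<inter> edg b E {x\<in>U. c x = l'} = {}" if "l \<noteq> l'" for l l'
  proof (rule ccontr)
    assume "edg b E {x\<in>U. c x = l} \<inter> edg b E {x\<in>U. c x = l'} \<noteq> {}"
    then obtain e where e1: "e \<in> edg b E {x\<in>U. c x = l}" and e2: "e \<in> edg b E {x\<in>U. c x = l'}" by blast
    from e1 obtain x y where "e = {x,y}" "c x = l" by (auto elim!: edgE)
    moreover from e2 obtain x' y' where "e = {x',y'}" "c x' = l'" "c y' = l'" by (auto elim!: edgE)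
    ultimately show False using that by (auto simp: doubleton_eq_iff)
  qed
  show ?thesis unfolding eq
    by (rule prod.UNION_disjoint) (auto simp: finite_edg fin disj)
qed


lemma cnt_empty [simp]: "cnt {} = (\<lambda>_. 0)" by (simp add: cnt_def)

lemma cnt_insert:
  assumes "x \<notin> U" "finite U"
  shows "cnt (insert x U) = (cnt U)(fst x := Suc (cnt U (fst x)))"
proof
  fix i
  have "{y\<in>insert x U. fst y = i} = (if fst x = i then insert x {y\<in>U. fst y = i} else {y\<in>U. fst y = i})"
    by auto
  then show "cnt (insert x U) i = ((cnt U)(fst x := Suc (cnt U (fst x)))) i"
    using assms by (auto simp: cnt_def)
qed

lemma cnt_le: "finite U \<Longrightarrow> T \<subseteq> U \<Longrightarrow> cnt T i \<le> cnt U i"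
  unfolding cnt_def by (rule card_mono) auto

lemma cnt_diff: "finite U \<Longrightarrow> T \<subseteq> U \<Longrightarrow> cnt (U - T) = (\<lambda>i. cnt U i - cnt T i)"
proof
  fix i assume fin: "finite U" and T: "T \<subseteq> U"
  have "{x \<in> U - T. fst x = i} = {x\<in>U. fst x = i} - {x\<in>T. fst x = i}" by auto
  moreover have "{x\<in>T. fst x = i} \<subseteq> {x\<in>U. fst x = i}" using T by auto
  moreover have "finite {x\<in>U. fst x = i}" using fin by simp
  ultimately show "cnt (U - T) i = cnt U i - cnt T i"
    unfolding cnt_def by (simp add: card_Diff_subset finite_subset)
qed

lemma card_fibre:
  fixes U :: "('v::finite \<times> nat) set"
  assumes "finite U"
  shows "card {T. T \<subseteq> U \<and> cnt T = m} = (\<Prod>i\<in>UNIV. cnt U i choose m i)"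
  using assms
proof (induction U arbitrary: m rule: finite_induct)
  case empty
  show ?case
  proof (cases "m = (\<lambda>_. 0)")
    case True
    then have "{T. T \<subseteq> {} \<and> cnt T = m} = {{}}" by auto
    then show ?thesis using True by simp
  next
    case False
    then have e: "{T. T \<subseteq> {} \<and> cnt T = m} = {}" by auto
    obtain i where "m i \<noteq> 0" using False by auto
    then have p0: "(\<Prod>i\<in>UNIV. cnt {} i choose m i) = 0"
      by (intro prod_zero) auto
    show ?thesis unfolding e p0 by simp
  qed
next
  case (insert x U)
  define i0 where "i0 = fst x"
  define m' where "m' = m(i0 := m i0 - 1)"
  have cntins: "cnt (insert x T) = (cnt T)(i0 := Suc (cnt T i0))" if "T \<subseteq> U" for T
    unfolding i0_def using that insert.hyps by (intro cnt_insert) (auto intro: finite_subset)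
  have split: "{T. T \<subseteq> insert x U \<and> cnt T = m} = {T. T \<subseteq> U \<and> cnt T = m} \<union> insert x ` {T. T \<subseteq> U \<and> cnt (insert x T) = m}"
  proof (intro equalityI subsetI)
    fix T assume T: "T \<in> {T. T \<subseteq> insert x U \<and> cnt T = m}"
    show "T \<in> {T. T \<subseteq> U \<and> cnt T = m} \<union> insert x ` {T. T \<subseteq> U \<and> cnt (insert x T) = m}"
    proof (cases "x \<in> T")
      case True
      then have Tx: "T = insert x (T - {x})" by auto
      moreover have "T - {x} \<subseteq> U" using T by auto
      ultimately have "T - {x} \<in> {T. T \<subseteq> U \<and> cnt (insert x T) = m}" using T by simp
      then have "insert x (T - {x}) \<in> insert x ` {T. T \<subseteq> U \<and> cnt (insert x T) = m}" by (rule imageI)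
      then show ?thesis using Tx by simp
    next
      case False
      then show ?thesis using T by auto
    qed
  qed auto
  have disj: "{T. T \<subseteq> U \<and> cnt T = m} \<inter> insert x ` {T. T \<subseteq> U \<and> cnt (insert x T) = m} = {}"
    using insert.hyps by auto
  have inj: "inj_on (insert x) {T. T \<subseteq> U \<and> cnt (insert x T) = m}"
  proof (rule inj_onI)
    fix A B assume "A \<in> {T. T \<subseteq> U \<and> cnt (insert x T) = m}" "B \<in> {T. T \<subseteq> U \<and> cnt (insert x T) = m}"
      and eqAB: "insert x A = insert x B"
    then have "x \<notin> A" "x \<notin> B" using insert.hyps by auto
    then show "A = B" using eqAB insert_ident[of x A B] by simp
  qed
  have finA: "finite {T. T \<subseteq> U \<and> cnt T = m}"
    by (rule finite_subset[of _ "Pow U"]) (use insert.hyps in auto)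
  have finB: "finite {T. T \<subseteq> U \<and> cnt (insert x T) = m}"
    by (rule finite_subset[of _ "Pow U"]) (use insert.hyps in auto)
  have second: "{T. T \<subseteq> U \<and> cnt (insert x T) = m} = (if m i0 = 0 then {} else {T. T \<subseteq> U \<and> cnt T = m'})"
  proof -
    have "cnt (insert x T) = m \<longleftrightarrow> m i0 \<noteq> 0 \<and> cnt T = m'" if "T \<subseteq> U" for T
      unfolding cntins[OF that] m'_def by (auto simp: fun_eq_iff split: if_splits)
    then show ?thesis by auto
  qed
  have cU: "cnt (insert x U) = (cnt U)(i0 := Suc (cnt U i0))" using cntins[of U] by simp
  define R where "R = (\<Prod>i\<in>UNIV - {i0}. cnt U i choose m i)"
  have pr: "(\<Prod>i\<in>UNIV. c i choose mm i) = (c i0 choose mm i0) * R"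
    if "\<forall>i. i \<noteq> i0 \<longrightarrow> c i = cnt U i \<and> mm i = m i" for c mm
  proof -
    have "(\<Prod>i\<in>UNIV. c i choose mm i) = (c i0 choose mm i0) * (\<Prod>i\<in>UNIV - {i0}. c i choose mm i)"
      by (rule prod.remove) auto
    also have "(\<Prod>i\<in>UNIV - {i0}. c i choose mm i) = R"
      unfolding R_def using that by (intro prod.cong) auto
    finally show ?thesis .
  qed
  have "card {T. T \<subseteq> insert x U \<and> cnt T = m} = card {T. T \<subseteq> U \<and> cnt T = m} + card {T. T \<subseteq> U \<and> cnt (insert x T) = m}"
    unfolding split using disj finA finB inj by (simp add: card_Un_disjoint card_image)
  also have "\<dots> = (\<Prod>i\<in>UNIV. cnt U i choose m i) + (if m i0 = 0 then 0 else (\<Prod>i\<in>UNIV. cnt U i choose m' i))"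
    unfolding second by (simp add: insert.IH)
  also have "\<dots> = (\<Prod>i\<in>UNIV. cnt (insert x U) i choose m i)"
  proof (cases "m i0")
    case 0
    then show ?thesis using pr[of "cnt U" m] pr[of "cnt (insert x U)" m] by (simp add: cU)
  next
    case (Suc t)
    then show ?thesis using pr[of "cnt U" m] pr[of "cnt (insert x U)" m] pr[of "cnt U" m']
      by (simp add: cU m'_def algebra_simps)
  qed
  finally show ?case .
qed


lemma finite_mleC: "finite {m::'v::finite\<Rightarrow>nat. \<forall>i. m i \<le> n i}"
proof -
  have "{m::'v\<Rightarrow>nat. \<forall>i. m i \<le> n i} = PiE UNIV (\<lambda>i. {..n i})"
    by (auto simp: PiE_def extensional_def Pi_def)
  then show ?thesis by (simp add: finite_PiE)
qed

lemma mfact_split: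
  fixes m n :: "'v::finite \<Rightarrow> nat"
  assumes "\<forall>i. m i \<le> n i"
  shows "of_nat (\<Prod>i\<in>UNIV. n i choose m i) * ((\<Prod>i\<in>UNIV. fact (m i)) * (\<Prod>i\<in>UNIV. fact (n i - m i)))
         = (\<Prod>i\<in>UNIV. fact (n i) :: 'a::field_char_0)"
proof -
  have e: "of_nat (n i choose m i) * (fact (m i) * fact (n i - m i)) = (fact (n i) :: 'a)" for i
  proof -
    have "fact (m i) * fact (n i - m i) * (n i choose m i) = (fact (n i) :: nat)"
      using assms by (intro binomial_fact_lemma) auto
    then have "of_nat (fact (m i) * fact (n i - m i) * (n i choose m i)) = (of_nat (fact (n i)) :: 'a)"
      by simp
    then show ?thesis by (simp add: of_nat_mult mult_ac)
  qed
  have "of_nat (\<Prod>i\<in>UNIV. n i choose m i) * ((\<Prod>i\<in>UNIV. fact (m i)) * (\<Prod>i\<in>UNIV. fact (n i - m i)))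
       = (\<Prod>i\<in>UNIV. of_nat (n i choose m i) * (fact (m i) * fact (n i - m i)) :: 'a)"
    by (simp add: of_nat_prod prod.distrib)
  also have "\<dots> = (\<Prod>i\<in>UNIV. fact (n i))" by (simp add: e)
  finally show ?thesis .
qed

lemma colsum:
  fixes U :: "('v::finite \<times> nat) set" and f :: "('v \<Rightarrow> nat) \<Rightarrow> 'a::field_char_0"
  assumes "finite U"
  shows "(\<Sum>c\<in>U \<rightarrow>\<^sub>E {0..<k}. \<Prod>l<k. f (cnt {x\<in>U. c x = l}))
         = (\<Prod>i\<in>UNIV. fact (cnt U i)) * mfps_pow (\<lambda>m. f m / (\<Prod>i\<in>UNIV. fact (m i))) k (cnt U)"
  using assms
proof (induction k arbitrary: U)
  case 0
  show ?case
  proof (cases "U = {}")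
    case True
    then show ?thesis by (simp add: mfps_one_def)
  next
    case False
    then obtain x where x: "x \<in> U" by auto
    then have e: "U \<rightarrow>\<^sub>E ({}::nat set) = {}" by (auto simp: PiE_eq_empty_iff)
    have "x \<in> {y\<in>U. fst y = fst x}" using x by simp
    moreover have "finite {y\<in>U. fst y = fst x}" using 0 by simp
    ultimately have "card {y\<in>U. fst y = fst x} \<noteq> 0" by (metis card_0_eq empty_iff)
    then have "cnt U \<noteq> (\<lambda>_. 0)" by (auto simp: cnt_def fun_eq_iff)
    then show ?thesis by (simp add: mfps_one_def e)
  qed
next
  case (Suc k)
  define P where "P = (\<lambda>m. f m / (\<Prod>i\<in>UNIV. fact (m i)) :: 'a)"
  define n where "n = cnt U"
  define S where "S = Sigma {T. T \<subseteq> U} (\<lambda>T. (U - T) \<rightarrow>\<^sub>E {0..<k})"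
  define jj where "jj = (\<lambda>c::('v \<times> nat \<Rightarrow> nat). ({x\<in>U. c x = k}, \<lambda>x. if x \<in> U \<and> c x \<noteq> k then c x else undefined))"
  define ii where "ii = (\<lambda>p::(('v \<times> nat) set \<times> ('v \<times> nat \<Rightarrow> nat)). \<lambda>x. if x \<in> fst p then k else snd p x)"
  define g where "g = (\<lambda>c::('v \<times> nat \<Rightarrow> nat). \<Prod>l<Suc k. f (cnt {x\<in>U. c x = l}))"
  define h where "h = (\<lambda>p::(('v \<times> nat) set \<times> ('v \<times> nat \<Rightarrow> nat)). f (cnt (fst p)) * (\<Prod>l<k. f (cnt {x\<in>U - fst p. snd p x = l})))"
  have w1: "ii (jj c) = c" if c: "c \<in> U \<rightarrow>\<^sub>E {0..<Suc k}" for c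
  proof
    fix x show "ii (jj c) x = c x"
      by (cases "x \<in> U") (auto simp: ii_def jj_def PiE_arb[OF c])
  qed
  have w2: "jj c \<in> S" if c: "c \<in> U \<rightarrow>\<^sub>E {0..<Suc k}" for c
  proof -
    have "(\<lambda>x. if x \<in> U \<and> c x \<noteq> k then c x else undefined) \<in> (U - {x\<in>U. c x = k}) \<rightarrow>\<^sub>E {0..<k}"
    proof (rule PiE_I)
      fix x assume "x \<in> U - {x\<in>U. c x = k}"
      then have "x \<in> U" "c x \<noteq> k" by auto
      moreover have "c x < Suc k" using PiE_mem[OF c \<open>x \<in> U\<close>] by simp
      ultimately show "(if x \<in> U \<and> c x \<noteq> k then c x else undefined) \<in> {0..<k}" by simp
    next
      fix x assume "x \<notin> U - {x\<in>U. c x = k}"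
      then show "(if x \<in> U \<and> c x \<noteq> k then c x else undefined) = undefined" by auto
    qed
    then show ?thesis by (simp add: S_def jj_def)
  qed
  have w3: "jj (ii p) = p" if p: "p \<in> S" for p
  proof -
    obtain T c' where pe: "p = (T, c')" by (cases p)
    with p have T: "T \<subseteq> U" and c': "c' \<in> (U - T) \<rightarrow>\<^sub>E {0..<k}" by (auto simp: S_def)
    have lt: "c' x < k" if "x \<in> U - T" for x using PiE_mem[OF c' that] by simp
    have und: "c' x = undefined" if "x \<notin> U - T" for x using PiE_arb[OF c' that] .
    have 1: "{x\<in>U. (if x \<in> T then k else c' x) = k} = T"
      using T lt by (auto dest: lt)
    have 2: "(\<lambda>x. if x \<in> U \<and> (if x \<in> T then k else c' x) \<noteq> k then (if x \<in> T then k else c' x) else undefined) = c'"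
    proof
      fix x show "(if x \<in> U \<and> (if x \<in> T then k else c' x) \<noteq> k then (if x \<in> T then k else c' x) else undefined) = c' x"
        using lt[of x] und[of x] by (cases "x \<in> U"; cases "x \<in> T") auto
    qed
    show ?thesis by (simp only: pe ii_def jj_def fst_conv snd_conv 1 2)
  qed
  have w4: "ii p \<in> U \<rightarrow>\<^sub>E {0..<Suc k}" if p: "p \<in> S" for p
  proof -
    obtain T c' where pe: "p = (T, c')" by (cases p)
    with p have T: "T \<subseteq> U" and c': "c' \<in> (U - T) \<rightarrow>\<^sub>E {0..<k}" by (auto simp: S_def)
    show ?thesis
    proof (rule PiE_I)
      fix x assume x: "x \<in> U"
      show "ii p x \<in> {0..<Suc k}"
      proof (cases "x \<in> T")
        case False
        then have "c' x < k" using PiE_mem[OF c', of x] x by simp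
        then show ?thesis using False by (simp add: ii_def pe)
      qed (simp add: ii_def pe)
    next
      fix x assume x: "x \<notin> U"
      then have "x \<notin> T" using T by auto
      then show "ii p x = undefined" using PiE_arb[OF c', of x] x by (simp add: ii_def pe)
    qed
  qed
  have w5: "h (jj c) = g c" if c: "c \<in> U \<rightarrow>\<^sub>E {0..<Suc k}" for c
  proof -
    have e: "{x \<in> U - {x\<in>U. c x = k}. (if x \<in> U \<and> c x \<noteq> k then c x else undefined) = l} = {x\<in>U. c x = l}"
      if "l < k" for l using that by auto
    have "h (jj c) = f (cnt {x\<in>U. c x = k}) * (\<Prod>l<k. f (cnt {x \<in> U - {x\<in>U. c x = k}. (if x \<in> U \<and> c x \<noteq> k then c x else undefined) = l}))"
      by (simp only: h_def jj_def fst_conv snd_conv)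
    also have "\<dots> = f (cnt {x\<in>U. c x = k}) * (\<Prod>l<k. f (cnt {x\<in>U. c x = l}))"
    proof (intro arg_cong2[where f="(*)"] refl prod.cong)
      fix l assume "l \<in> {..<k}"
      then show "f (cnt {x \<in> U - {x\<in>U. c x = k}. (if x \<in> U \<and> c x \<noteq> k then c x else undefined) = l}) = f (cnt {x\<in>U. c x = l})"
        using e[of l] by simp
    qed
    also have "\<dots> = g c" by (simp add: g_def)
    finally show ?thesis .
  qed
  have finS: "finite {T. T \<subseteq> U}" using Suc.prems by simp
  have "(\<Sum>c\<in>U \<rightarrow>\<^sub>E {0..<Suc k}. g c) = (\<Sum>p\<in>S. h p)"
    by (rule sum.reindex_bij_witness[where i=ii and j=jj]) (erule w1, erule w2, erule w3, erule w4, erule w5)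
  also have "\<dots> = (\<Sum>T\<in>{T. T \<subseteq> U}. f (cnt T) * (\<Sum>c'\<in>(U - T) \<rightarrow>\<^sub>E {0..<k}. \<Prod>l<k. f (cnt {x\<in>U - T. c' x = l})))"
    unfolding S_def h_def sum_distrib_left
    by (subst sum.Sigma) (use finS Suc.prems in \<open>auto simp: split_def intro: finite_PiE\<close>)
  also have "\<dots> = (\<Sum>T\<in>{T. T \<subseteq> U}. f (cnt T) * ((\<Prod>i\<in>UNIV. fact (n i - cnt T i)) * mfps_pow P k (\<lambda>i. n i - cnt T i)))"
  proof (intro sum.cong refl)
    fix T assume "T \<in> {T. T \<subseteq> U}"
    then have T: "T \<subseteq> U" by simp
    have "finite (U - T)" using Suc.prems by simp
    from Suc.IH[OF this] cnt_diff[OF Suc.prems T]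
    show "f (cnt T) * (\<Sum>c'\<in>(U - T) \<rightarrow>\<^sub>E {0..<k}. \<Prod>l<k. f (cnt {x\<in>U - T. c' x = l}))
        = f (cnt T) * ((\<Prod>i\<in>UNIV. fact (n i - cnt T i)) * mfps_pow P k (\<lambda>i. n i - cnt T i))"
      by (simp add: P_def n_def)
  qed
  also have "\<dots> = (\<Sum>m\<in>{m. \<forall>i. m i \<le> n i}. \<Sum>T\<in>{T\<in>{T. T \<subseteq> U}. cnt T = m}. f (cnt T) * ((\<Prod>i\<in>UNIV. fact (n i - cnt T i)) * mfps_pow P k (\<lambda>i. n i - cnt T i)))"
    by (rule sum.group[symmetric]) (use finS Suc.prems in \<open>auto simp: finite_mleC n_def intro: cnt_le\<close>)
  also have "\<dots> = (\<Sum>m\<in>{m. \<forall>i. m i \<le> n i}. of_nat (\<Prod>i\<in>UNIV. n i choose m i) * (f m * ((\<Prod>i\<in>UNIV. fact (n i - m i)) * mfps_pow P k (\<lambda>i. n i - m i))))"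
  proof (intro sum.cong refl)
    fix m
    have "{T\<in>{T. T \<subseteq> U}. cnt T = m} = {T. T \<subseteq> U \<and> cnt T = m}" by auto
    then show "(\<Sum>T\<in>{T\<in>{T. T \<subseteq> U}. cnt T = m}. f (cnt T) * ((\<Prod>i\<in>UNIV. fact (n i - cnt T i)) * mfps_pow P k (\<lambda>i. n i - cnt T i)))
        = of_nat (\<Prod>i\<in>UNIV. n i choose m i) * (f m * ((\<Prod>i\<in>UNIV. fact (n i - m i)) * mfps_pow P k (\<lambda>i. n i - m i)))"
      using card_fibre[OF Suc.prems, of m] by (simp add: n_def)
  qed
  also have "\<dots> = (\<Sum>m\<in>{m. \<forall>i. m i \<le> n i}. (\<Prod>i\<in>UNIV. fact (n i)) * (P m * mfps_pow P k (\<lambda>i. n i - m i)))"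
  proof (intro sum.cong refl)
    fix m assume "m \<in> {m. \<forall>i. m i \<le> n i}"
    then have ms: "of_nat (\<Prod>i\<in>UNIV. n i choose m i) * ((\<Prod>i\<in>UNIV. fact (m i)) * (\<Prod>i\<in>UNIV. fact (n i - m i)))
         = (\<Prod>i\<in>UNIV. fact (n i) :: 'a)" by (intro mfact_split) simp
    have nz: "(\<Prod>i\<in>UNIV. fact (m i) :: 'a) \<noteq> 0" by simp
    show "of_nat (\<Prod>i\<in>UNIV. n i choose m i) * (f m * ((\<Prod>i\<in>UNIV. fact (n i - m i)) * mfps_pow P k (\<lambda>i. n i - m i)))
        = (\<Prod>i\<in>UNIV. fact (n i)) * (P m * mfps_pow P k (\<lambda>i. n i - m i))"
      unfolding ms[symmetric] P_def using nz by (simp add: field_simps)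
  qed
  also have "\<dots> = (\<Prod>i\<in>UNIV. fact (n i)) * mfps_pow P (Suc k) n"
    by (simp add: mfps_mult_def sum_distrib_left)
  finally show ?case by (simp add: g_def n_def P_def)
qed


lemma blowV_eq: "blowV n = Sigma UNIV (\<lambda>i. {..<n i})"
  by (auto simp: blowV_def)

lemma finite_blowV: "finite (blowV (n :: 'v::finite \<Rightarrow> nat))"
  unfolding blowV_eq by (rule finite_SigmaI) auto

lemma cnt_blowV: "cnt (blowV n) = n"
proof
  fix i
  have "{x \<in> blowV n. fst x = i} = {i} \<times> {..<n i}" by (auto simp: blowV_def)
  then show "cnt (blowV n) i = n i" by (simp add: cnt_def card_cartesian_product)
qed

lemma blowE_edg: "blowE E n = edg False E (blowV n)"
  unfolding blowE_def edg_def blowV_def by auto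

lemma cliqueE_edg: "blowE E n \<union> cliqueE n = edg True E (blowV n)"
  unfolding blowE_def cliqueE_def edg_def blowV_def by auto

lemma main_nat:
  fixes E :: "('v::finite) set set" and v :: "'v set \<Rightarrow> 'a::field_char_0" and w :: "'v \<Rightarrow> 'a"
  assumes simple: "\<forall>e\<in>E. card e = 2"
  shows "tutteZ (blowV n) (edg b E (blowV n)) (blow_wt v w) (of_nat k) / (\<Prod>i\<in>UNIV. fact (n i))
        = mfps_powr (\<lambda>m. Wf b E v w m / (\<Prod>i\<in>UNIV. fact (m i))) (of_nat k) n"
proof -
  define U where "U = blowV n"
  have finU: "finite U" by (simp add: U_def finite_blowV)
  have Ecnd: "\<forall>e\<in>edg b E U. \<exists>x y. e = {x,y} \<and> x \<in> U \<and> y \<in> U"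
    by (auto elim!: edgE)
  have "tutteZ U (edg b E U) (blow_wt v w) (of_nat k)
      = (\<Sum>c \<in> U \<rightarrow>\<^sub>E {0..<k}. \<Prod>e\<in>{e\<in>edg b E U. \<forall>x\<in>e. \<forall>y\<in>e. c x = c y}. 1 + blow_wt v w e)"
    by (rule tutte_nat[OF finU Ecnd])
  also have "\<dots> = (\<Sum>c \<in> U \<rightarrow>\<^sub>E {0..<k}. \<Prod>l<k. \<Prod>e\<in>edg b E {x\<in>U. c x = l}. 1 + blow_wt v w e)"
    by (intro sum.cong refl mono_split[OF finU])
  also have "\<dots> = (\<Sum>c \<in> U \<rightarrow>\<^sub>E {0..<k}. \<Prod>l<k. Wf b E v w (cnt {x\<in>U. c x = l}))"
    by (intro sum.cong prod.cong refl prod_edg simple) (simp add: finU)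
  also have "\<dots> = (\<Prod>i\<in>UNIV. fact (cnt U i)) * mfps_pow (\<lambda>m. Wf b E v w m / (\<Prod>i\<in>UNIV. fact (m i))) k (cnt U)"
    by (rule colsum[OF finU])
  also have "\<dots> = (\<Prod>i\<in>UNIV. fact (n i)) * mfps_pow (\<lambda>m. Wf b E v w m / (\<Prod>i\<in>UNIV. fact (m i))) k n"
    by (simp add: U_def cnt_blowV)
  finally have eq: "tutteZ U (edg b E U) (blow_wt v w) (of_nat k) = (\<Prod>i\<in>UNIV. fact (n i)) * mfps_pow (\<lambda>m. Wf b E v w m / (\<Prod>i\<in>UNIV. fact (m i))) k n" .
  have W0: "Wf b E v w (\<lambda>_. 0) / (\<Prod>i\<in>UNIV. fact ((\<lambda>_::'v. 0::nat) i)) = (1::'a)"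
  proof -
    have "(\<Prod>i\<in>e. (0::nat)) = 0" if "e \<in> E" for e
    proof -
      have "card e = 2" using simple that by auto
      then have "finite e" by (metis card.infinite zero_neq_numeral)
      moreover have "e \<noteq> {}" using \<open>card e = 2\<close> by auto
      ultimately have "e \<noteq> {}" "finite e" by auto
      then show ?thesis by (simp add: card_gt_0_iff)
    qed
    then show ?thesis by (auto simp: Wf_def power_0_left intro!: prod.neutral)
  qed
  have "tutteZ (blowV n) (edg b E (blowV n)) (blow_wt v w) (of_nat k) / (\<Prod>i\<in>UNIV. fact (n i))
      = mfps_pow (\<lambda>m. Wf b E v w m / (\<Prod>i\<in>UNIV. fact (m i))) k n"
    using eq by (simp add: U_def)
  also have "\<dots> = mfps_powr (\<lambda>m. Wf b E v w m / (\<Prod>i\<in>UNIV. fact (m i))) (of_nat k) n"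
    by (subst powr_nat) (use W0 in simp_all)
  finally show ?thesis .
qed

lemma main_q:
  fixes E :: "('v::finite) set set" and v :: "'v set \<Rightarrow> 'a::field_char_0" and w :: "'v \<Rightarrow> 'a"
  assumes simple: "\<forall>e\<in>E. card e = 2"
  shows "(\<lambda>n. tutteZ (blowV n) (edg b E (blowV n)) (blow_wt v w) q / (\<Prod>i\<in>UNIV. fact (n i)))
        = mfps_powr (\<lambda>m. Wf b E v w m / (\<Prod>i\<in>UNIV. fact (m i))) q"
proof
  fix n :: "'v \<Rightarrow> nat"
  define Es where "Es = edg b E (blowV n)"
  define c where "c = (\<Prod>i\<in>UNIV. fact (n i) :: 'a)"
  show "tutteZ (blowV n) (edg b E (blowV n)) (blow_wt v w) q / (\<Prod>i\<in>UNIV. fact (n i))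
        = mfps_powr (\<lambda>m. Wf b E v w m / (\<Prod>i\<in>UNIV. fact (m i))) q n"
  proof (rule poly_agree[where P = "\<lambda>q. tutteZ (blowV n) (edg b E (blowV n)) (blow_wt v w) q / (\<Prod>i\<in>UNIV. fact (n i))"
        and Q = "\<lambda>q. mfps_powr (\<lambda>m. Wf b E v w m / (\<Prod>i\<in>UNIV. fact (m i))) q n"])
    fix q :: 'a
    show "tutteZ (blowV n) (edg b E (blowV n)) (blow_wt v w) q / (\<Prod>i\<in>UNIV. fact (n i))
        = poly (\<Sum>A\<in>Pow Es. monom ((\<Prod>e\<in>A. blow_wt v w e) / c) (num_comps (blowV n) A)) q"
      by (simp add: tutteZ_def poly_sum poly_monom Es_def c_def sum_divide_distrib mult_ac)
  next
    fix q :: 'a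
    show "mfps_powr (\<lambda>m. Wf b E v w m / (\<Prod>i\<in>UNIV. fact (m i))) q n
        = poly (\<Sum>j\<le>mdeg n. monom (mfps_pow (mfps_log (\<lambda>m. Wf b E v w m / (\<Prod>i\<in>UNIV. fact (m i)))) j n / fact j) j) q"
      by (rule powr_poly)
  next
    fix k :: nat
    show "tutteZ (blowV n) (edg b E (blowV n)) (blow_wt v w) (of_nat k) / (\<Prod>i\<in>UNIV. fact (n i))
        = mfps_powr (\<lambda>m. Wf b E v w m / (\<Prod>i\<in>UNIV. fact (m i))) (of_nat k) n"
      by (rule main_nat[OF simple])
  qed
qed

theorem theorem3p3:
  fixes E :: "('v::finite) set set"
    and v :: "'v set \<Rightarrow> 'a::field_char_0"
    and w :: "'v \<Rightarrow> 'a"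
    and q :: 'a
  assumes simple: "\<forall>e\<in>E. card e = 2"
  shows "(\<lambda>n. tutteZ (blowV n) (blowE E n) (blow_wt v w) q / (\<Prod>i\<in>UNIV. fact (n i)))
           = mfps_powr (\<lambda>n. (\<Prod>e\<in>E. (1 + v e) ^ (\<Prod>i\<in>e. n i)) / (\<Prod>i\<in>UNIV. fact (n i))) q
       \<and> (\<lambda>n. tutteZ (blowV n) (blowE E n \<union> cliqueE n) (blow_wt v w) q / (\<Prod>i\<in>UNIV. fact (n i)))
           = mfps_powr (\<lambda>n. (\<Prod>e\<in>E. (1 + v e) ^ (\<Prod>i\<in>e. n i))
                            * (\<Prod>i\<in>UNIV. (1 + w i) ^ (n i * (n i - 1) div 2))
                            / (\<Prod>i\<in>UNIV. fact (n i))) q"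
proof
  show "(\<lambda>n. tutteZ (blowV n) (blowE E n) (blow_wt v w) q / (\<Prod>i\<in>UNIV. fact (n i)))
           = mfps_powr (\<lambda>n. (\<Prod>e\<in>E. (1 + v e) ^ (\<Prod>i\<in>e. n i)) / (\<Prod>i\<in>UNIV. fact (n i))) q"
    using main_q[OF simple, of False v w q] by (simp add: blowE_edg Wf_def)
  show "(\<lambda>n. tutteZ (blowV n) (blowE E n \<union> cliqueE n) (blow_wt v w) q / (\<Prod>i\<in>UNIV. fact (n i)))
           = mfps_powr (\<lambda>n. (\<Prod>e\<in>E. (1 + v e) ^ (\<Prod>i\<in>e. n i))
                            * (\<Prod>i\<in>UNIV. (1 + w i) ^ (n i * (n i - 1) div 2))
                            / (\<Prod>i\<in>UNIV. fact (n i))) q"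
    using main_q[OF simple, of True v w q] by (simp add: cliqueE_edg Wf_def)
qed


end
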